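(* Consider a linearly separable training set $\{(\mathbf{x}_i,y_i)\}_{i=1}^N$, $\mathbf{x}_i\in\mathbb{R}^n$, $y_i\in\{-1,1\}$, whose maximum-margin separating hyperplane passes through the origin, and train a linear model with learnable bias by gradient descent (small step size $\eta$, approximated by gradient flow) on the exponential loss $\mathcal{L}(\mathbf{w},b)=\sum_{i=1}^N e^{-y_i(\mathbf{w}^T\mathbf{x}_i+b)}$. Suppose the weight iterates satisfy $\mathbf{w}(t)=\hat{\mathbf{w}}\log t+\boldsymbol\rho(t)$ with $\|\boldsymbol\rho(t)\|$ bounded and $\boldsymbol\rho(t)\to\tilde{\mathbf{w}}$, where $\hat{\mathbf{w}}$ is the hard-margin SVM weight vector (so $y_i\hat{\mathbf{w}}^T\mathbf{x}_i=1$ on support vectors), the support vectors span the dataset, $\hat{\mathbf{w}}=\sum_{i\in\mathcal{S}}\alpha_i\mathbf{x}_{s,i}$, and $\tilde{\mathbf{w}}$ satisfies $\eta\exp(-\mathbf{x}_{s,i}^T\tilde{\mathbf{w}})=\alpha_i$ for each support vector. Let $\mathcal{S}^+$, $\mathcal{S}^-$ be the support vectors of class $+1$ and $-1$ respectively, and define $A_S^+=\sum_{i\in\mathcal{S}^+}\exp(-\tilde{\mathbf{w}}^T\mathbf{x}_i)$, $A_S^-=\sum_{i\in\mathcal{S}^-}\exp(\tilde{\mathbf{w}}^T\mathbf{x}_i)$, $\delta=\sqrt{A_S^-/A_S^+}$, and $g(t)=2\sqrt{A_S^+A_S^-}\log(t/t_0)$, where $t_0$ is a constant (the time at which the late-time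 dynamics begin). If the bias is initialized at $0$, then the late-time gradient flow dynamics of the bias follow $$\frac{db}{dt}=\frac{1}{t}\left(A_S^+e^{-b}-A_S^-e^{b}\right),$$ and integrating, $$b(t)=\log\left(\frac{(1+\delta)\exp(g(t))-(1-\delta)}{(1+\delta)\exp(g(t))+(1-\delta)}\right)-\log\delta .$$ Consequently $b(t)$ converges to $b_\infty=-\log\delta$.
   Context: Support vectors are the training points $\mathbf{x}_{s,i}$ with $y_i(\mathbf{w}_{SVM}^T\mathbf{x}_i+b_{SVM})=1$, where $(\mathbf{w}_{SVM},b_{SVM})$ is the minimum-norm solution of $y_i(\mathbf{w}^T\mathbf{x}_i+b)\ge 1$ for all $i$; by assumption $b_{SVM}=0$. "Late-time dynamics" refers to times $t\ge t_0$ at which $\boldsymbol\rho(t)$ may be replaced by its limit $\tilde{\mathbf{w}}$ and only support vectors contribute to the loss gradient. *)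

theory Defs
  imports "HOL-Analysis.Analysis"
begin

definition svm_feasible :: "nat \<Rightarrow> (nat \<Rightarrow> real^'n) \<Rightarrow> (nat \<Rightarrow> real) \<Rightarrow> real^'n \<Rightarrow> real \<Rightarrow> bool" where
  "svm_feasible N x y w b \<longleftrightarrow> (\<forall>i<N. y i * (w \<bullet> x i + b) \<ge> 1)"

definition is_hard_margin_svm :: "nat \<Rightarrow> (nat \<Rightarrow> real^'n) \<Rightarrow> (nat \<Rightarrow> real) \<Rightarrow> real^'n \<Rightarrow> real \<Rightarrow> bool" where
  "is_hard_margin_svm N x y w b \<longleftrightarrow>
     svm_feasible N x y w b \<and> (\<forall>w' b'. svm_feasible N x y w' b' \<longrightarrow> norm w \<le> norm w')"

definition support_vectors :: "nat \<Rightarrow> (nat \<Rightarrow> real^'n) \<Rightarrow> (nat \<Rightarrow> real) \<Rightarrow> real^'n \<Rightarrow> real \<Rightarrow> nat set" where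
  "support_vectors N x y w b = {i. i < N \<and> y i * (w \<bullet> x i + b) = 1}"

text \<open>Negative partial derivative of the exponential loss with respect to the bias,
  restricted to an index set I (late time: only support vectors contribute).\<close>
definition neg_dL_db :: "nat set \<Rightarrow> (nat \<Rightarrow> real^'n) \<Rightarrow> (nat \<Rightarrow> real) \<Rightarrow> real^'n \<Rightarrow> real \<Rightarrow> real" where
  "neg_dL_db I x y w b = (\<Sum>i\<in>I. y i * exp (- (y i * (w \<bullet> x i + b))))"

definition A_plus :: "nat set \<Rightarrow> (nat \<Rightarrow> real^'n) \<Rightarrow> (nat \<Rightarrow> real) \<Rightarrow> real^'n \<Rightarrow> real" where
  "A_plus S x y wt = (\<Sum>i\<in>{i\<in>S. y i = 1}. exp (- (wt \<bullet> x i)))"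

definition A_minus :: "nat set \<Rightarrow> (nat \<Rightarrow> real^'n) \<Rightarrow> (nat \<Rightarrow> real) \<Rightarrow> real^'n \<Rightarrow> real" where
  "A_minus S x y wt = (\<Sum>i\<in>{i\<in>S. y i = -1}. exp (wt \<bullet> x i))"

end

theory Submission
  imports Defs "HOL-Real_Asymp.Real_Asymp"
begin

lemma sv_class_exists:
  fixes x :: "nat \<Rightarrow> real^'n" and y :: "nat \<Rightarrow> real" and s :: real
  assumes labels: "\<forall>i<N. y i = 1 \<or> y i = -1" and s: "s = 1 \<or> s = -1"
    and ex: "\<exists>i<N. y i = s" and svm: "is_hard_margin_svm N x y w 0"
  shows "\<exists>i\<in>support_vectors N x y w 0. y i = s"
proof (rule ccontr)
  assume H: "\<not> ?thesis"
  define P where "P = {i. i<N \<and> y i = s}"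
  have fin: "finite P" "P \<noteq> {}" using ex unfolding P_def by auto
  have feas: "\<forall>i<N. y i * (w \<bullet> x i) \<ge> 1"
    using svm unfolding is_hard_margin_svm_def svm_feasible_def by simp
  have strict: "\<forall>i\<in>P. y i * (w \<bullet> x i) > 1"
    using H feas unfolding support_vectors_def P_def by force
  define \<epsilon> where "\<epsilon> = Min ((\<lambda>i. y i * (w \<bullet> x i) - 1) ` P)"
  have epos: "\<epsilon> > 0" using fin strict by (simp add: \<epsilon>_def)
  have ele0: "\<forall>i\<in>P. \<epsilon> \<le> y i * (w \<bullet> x i) - 1" using fin unfolding \<epsilon>_def by (auto intro: Min_le)
  have ele: "\<forall>i\<in>P. y i * (w \<bullet> x i) \<ge> 1 + \<epsilon>" using ele0 by auto
  define c where "c = 1/(1+\<epsilon>/2)"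
  have cpos: "c > 0" "c < 1" using epos by (auto simp: c_def field_simps)
  have "svm_feasible N x y (c *\<^sub>R w) (c * (- s * \<epsilon>/2))"
    unfolding svm_feasible_def
  proof (intro allI impI)
    fix i assume i: "i<N"
    have "y i * (w \<bullet> x i + (- s*\<epsilon>/2)) \<ge> 1 + \<epsilon>/2"
    proof (cases "y i = s")
      case True then have "i\<in>P" using i P_def by auto
      then show ?thesis using ele True s epos by (auto simp: algebra_simps)
    next
      case False then have "y i = -s" using labels i s by auto
      then show ?thesis using feas i s epos by (auto simp: algebra_simps)
    qed
    then have "c * (y i * (w \<bullet> x i + (- s*\<epsilon>/2))) \<ge> 1" using epos by (simp add: c_def field_simps)
    then show "y i * ((c *\<^sub>R w) \<bullet> x i + c * (- s*\<epsilon>/2)) \<ge> 1" by (simp add: algebra_simps)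
  qed
  then have "norm w \<le> norm (c *\<^sub>R w)" using svm unfolding is_hard_margin_svm_def by blast
  then have "norm w \<le> c * norm w" using cpos by simp
  then have "norm w = 0" using cpos by (smt (verit) mult_le_cancel_right1 norm_ge_zero)
  then have "w = 0" by simp
  then show False using feas ex by force
qed

lemma grad_formula:
  fixes x :: "nat \<Rightarrow> real^'n" and y :: "nat \<Rightarrow> real"
  assumes labels: "\<forall>i<N. y i = 1 \<or> y i = -1" and t: "t > 0"
  shows "neg_dL_db (support_vectors N x y w 0) x y (ln t *\<^sub>R w + wt) B
      = (1/t) * (A_plus (support_vectors N x y w 0) x y wt * exp (- B)
               - A_minus (support_vectors N x y w 0) x y wt * exp B)"
proof -
  define S where "S = support_vectors N x y w 0"
  define S1 where "S1 = {i\<in>S. y i = 1}"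
  define S2 where "S2 = {i\<in>S. y i = -1}"
  have finS: "finite S" unfolding S_def support_vectors_def by auto
  have SU: "S = S1 \<union> S2" using labels unfolding S1_def S2_def S_def support_vectors_def by auto
  have dis: "S1 \<inter> S2 = {}" unfolding S1_def S2_def by auto
  have f1: "finite S1" "finite S2" using finS unfolding S1_def S2_def by auto
  have e1: "y i * exp (- (y i * ((ln t *\<^sub>R w + wt) \<bullet> x i + B))) = (1/t) * (exp (- (wt \<bullet> x i)) * exp (-B))"
    if "i \<in> S1" for i
  proof -
    have "y i = 1" "w \<bullet> x i = 1" using that unfolding S1_def S_def support_vectors_def by auto
    then show ?thesis using t by (simp add: inner_add_left exp_add exp_diff exp_minus field_simps)
  qed
  have e2: "y i * exp (- (y i * ((ln t *\<^sub>R w + wt) \<bullet> x i + B))) = - ((1/t) * (exp (wt \<bullet> x i) * exp B))"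
    if "i \<in> S2" for i
  proof -
    have "y i = -1" "w \<bullet> x i = -1" using that unfolding S2_def S_def support_vectors_def by auto
    then show ?thesis using t by (simp add: inner_add_left exp_add exp_diff exp_minus field_simps)
  qed
  have "neg_dL_db S x y (ln t *\<^sub>R w + wt) B
      = (\<Sum>i\<in>S1. (1/t) * (exp (- (wt \<bullet> x i)) * exp (-B))) + (\<Sum>i\<in>S2. - ((1/t) * (exp (wt \<bullet> x i) * exp B)))"
    unfolding neg_dL_db_def SU using e1 e2 f1 dis by (simp add: sum.union_disjoint)
  also have "\<dots> = (1/t) * (A_plus S x y wt * exp (- B) - A_minus S x y wt * exp B)"
    unfolding A_plus_def A_minus_def S1_def S2_def
    by (simp add: sum_distrib_left sum_distrib_right sum_negf right_diff_distrib)
  finally show ?thesis unfolding S_def .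
qed

lemma alg:
  fixes E X t \<delta> Ap L :: real
  assumes "E > 0" "t > 0" "\<delta> > 0"
  shows "((0 - (0 * E + E * (1 / t * (Ap * inverse E - \<delta>^2 * Ap * E)) * \<delta>)) * (1 + \<delta> * E) -
      (1 - \<delta> * E) * (0 + (0 * E + E * (1 / t * (Ap * inverse E - \<delta>^2 * Ap * E)) * \<delta>))) /
     ((1 + \<delta> * E) * (1 + \<delta> * E)) * X +
     X * (0 * L + (1 / t * 1 - 0) * (2 * (\<delta> * Ap))) * ((1 - \<delta> * E) / (1 + \<delta> * E)) = 0"
proof -
  have p: "1 + \<delta> * E > 0" using assms by (simp add: add_pos_pos)
  have a: "E * (1 / t * (Ap * inverse E - \<delta>^2 * Ap * E)) * \<delta> = \<delta> * Ap * (1 - \<delta> * E) * (1 + \<delta> * E) / t"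
    using assms by (simp add: field_simps power2_eq_square)
  have q: "1 + \<delta> * E \<noteq> 0" "1 + E * \<delta> \<noteq> 0" "t \<noteq> 0" using p assms by (auto simp: mult.commute)
  define r where "r = 1 + \<delta> * E"
  have r0: "r \<noteq> 0" using q r_def by simp
  have m: "1 - \<delta> * E = 2 - r" unfolding r_def by simp
  show ?thesis unfolding a m r_def[symmetric] using r0 q(3)
    by (simp add: field_simps)
qed

theorem theorem4p4:
  fixes N :: nat and x :: "nat \<Rightarrow> real^'n" and y :: "nat \<Rightarrow> real"
    and w_hat w_tilde :: "real^'n" and \<alpha> :: "nat \<Rightarrow> real" and \<eta> t0 :: real
    and w \<rho> :: "real \<Rightarrow> real^'n" and b :: "real \<Rightarrow> real"
  defines "S \<equiv> support_vectors N x y w_hat 0"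
  defines "Ap \<equiv> A_plus S x y w_tilde"
  defines "Am \<equiv> A_minus S x y w_tilde"
  defines "\<delta> \<equiv> sqrt (Am / Ap)"
  defines "g \<equiv> (\<lambda>t. 2 * sqrt (Ap * Am) * ln (t / t0))"
  assumes labels: "\<forall>i<N. y i = 1 \<or> y i = -1"
    and both_classes: "\<exists>i<N. y i = 1" "\<exists>i<N. y i = -1"
    and svm: "is_hard_margin_svm N x y w_hat 0"
    and span_S: "x ` {..<N} \<subseteq> span (x ` S)"
    and w_hat_comb: "w_hat = (\<Sum>i\<in>S. \<alpha> i *\<^sub>R x i)"
    and eta_pos: "\<eta> > 0"
    and w_tilde_def: "\<forall>i\<in>S. \<eta> * exp (- (x i \<bullet> w_tilde)) = \<alpha> i"
    and w_decomp: "\<forall>t>0. w t = ln t *\<^sub>R w_hat + \<rho> t"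
    and rho_bounded: "bounded (range \<rho>)"
    and rho_lim: "(\<rho> \<longlongrightarrow> w_tilde) at_top"
    and t0_pos: "t0 > 0"
    and b_init: "b t0 = 0"
    and late_flow: "\<forall>t\<ge>t0. (b has_real_derivative
           neg_dL_db S x y (ln t *\<^sub>R w_hat + w_tilde) (b t)) (at t within {t0..})"
  shows "(\<forall>t\<ge>t0. (b has_real_derivative
           (1 / t) * (Ap * exp (- b t) - Am * exp (b t))) (at t within {t0..}))
       \<and> (\<forall>t\<ge>t0. b t = ln (((1 + \<delta>) * exp (g t) - (1 - \<delta>)) / ((1 + \<delta>) * exp (g t) + (1 - \<delta>)))
                        - ln \<delta>)
       \<and> (b \<longlongrightarrow> - ln \<delta>) at_top"
proof -
  have finS: "finite S" unfolding S_def support_vectors_def by auto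
  obtain i1 where i1: "i1 \<in> S" "y i1 = 1"
    using sv_class_exists[of N y 1 x w_hat] labels both_classes svm unfolding S_def by auto
  obtain i2 where i2: "i2 \<in> S" "y i2 = -1"
    using sv_class_exists[of N y "-1" x w_hat] labels both_classes svm unfolding S_def by auto
  have Ap_pos: "Ap > 0" unfolding Ap_def A_plus_def
    by (rule sum_pos) (use finS i1 in auto)
  have Am_pos: "Am > 0" unfolding Am_def A_minus_def
    by (rule sum_pos) (use finS i2 in auto)
  have dpos: "\<delta> > 0" unfolding \<delta>_def using Ap_pos Am_pos by simp
  have dsq: "\<delta>^2 = Am / Ap" unfolding \<delta>_def using Ap_pos Am_pos by simp
  have Am_eq: "Am = \<delta>^2 * Ap" using dsq Ap_pos by (simp add: field_simps)
  define k where "k = \<delta> * Ap"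
  have kpos: "k > 0" unfolding k_def using dpos Ap_pos by simp
  have sk: "sqrt (Ap * Am) = k"
  proof -
    have "Ap * Am = k^2" unfolding k_def Am_eq by (simp add: power2_eq_square)
    then show ?thesis using kpos by simp
  qed
  have db: "(b has_real_derivative (1 / t) * (Ap * exp (- b t) - Am * exp (b t))) (at t within {t0..})"
    if "t \<ge> t0" for t
  proof -
    have "t > 0" using that t0_pos by simp
    then have "neg_dL_db S x y (ln t *\<^sub>R w_hat + w_tilde) (b t) = (1 / t) * (Ap * exp (- b t) - Am * exp (b t))"
      unfolding S_def Ap_def Am_def using grad_formula[OF labels] by blast
    then show ?thesis using late_flow that by metis
  qed
  define \<Phi> where "\<Phi> = (\<lambda>t. (1 - \<delta> * exp (b t)) / (1 + \<delta> * exp (b t)) * exp (2 * k * (ln t - ln t0)))"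
  have dPhi: "(\<Phi> has_real_derivative 0) (at t within {t0..})" if "t \<in> {t0..}" for t
  proof -
    have t: "t > 0" using that t0_pos by simp
    have pos: "1 + \<delta> * exp (b t) > 0" using dpos by (simp add: add_pos_pos)
    have tt: "t \<ge> t0" using that by simp
    define B' where "B' = (1 / t) * (Ap * exp (- b t) - Am * exp (b t))"
    define X where "X = exp (2 * k * (ln t - ln t0))"
    have ne: "1 + \<delta> * exp (b t) \<noteq> 0" using pos by simp
    show ?thesis unfolding \<Phi>_def
      apply (rule DERIV_cong)
       apply (rule derivative_eq_intros db[OF tt] refl ne t)+
      unfolding exp_minus Am_eq k_def
      by (rule alg) (use t dpos in auto)
  qed
  obtain c where c: "\<forall>t\<in>{t0..}. \<Phi> t = c"
    using has_field_derivative_zero_constant[of "{t0..}" \<Phi>] dPhi by auto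
  have Phi0: "\<Phi> t0 = (1 - \<delta>) / (1 + \<delta>)" unfolding \<Phi>_def using b_init by simp
  have gt: "g t = 2 * k * (ln t - ln t0)" if "t > 0" for t
    unfolding g_def sk using that t0_pos by (simp add: ln_div)
  have formula: "b t = ln (((1 + \<delta>) * exp (g t) - (1 - \<delta>)) / ((1 + \<delta>) * exp (g t) + (1 - \<delta>))) - ln \<delta>"
    if tt: "t \<ge> t0" for t
  proof -
    have t: "t > 0" using tt t0_pos by simp
    define E where "E = exp (g t)"
    define v where "v = \<delta> * exp (b t)"
    have vpos: "v > 0" unfolding v_def using dpos by simp
    have "ln t0 \<le> ln t" using tt t0_pos by simp
    then have "g t \<ge> 0" using gt[OF t] kpos by simp
    then have E1: "E \<ge> 1" unfolding E_def by simp
    have "\<Phi> t = \<Phi> t0" using c tt by simp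
    then have "(1 - v) / (1 + v) * E = (1 - \<delta>) / (1 + \<delta>)"
      unfolding Phi0 unfolding \<Phi>_def v_def E_def gt[OF t] .
    then have "(1 + \<delta>) * (1 - v) * E = (1 - \<delta>) * (1 + v)"
      using vpos dpos by (simp add: field_simps)
    then have eq: "v * ((1 + \<delta>) * E + (1 - \<delta>)) = (1 + \<delta>) * E - (1 - \<delta>)"
      by (simp add: algebra_simps)
    have "(1 + \<delta>) * E \<ge> (1 + \<delta>) * 1" using E1 dpos by (intro mult_left_mono) auto
    then have den: "(1 + \<delta>) * E + (1 - \<delta>) > 0" by simp
    have v: "v = ((1 + \<delta>) * E - (1 - \<delta>)) / ((1 + \<delta>) * E + (1 - \<delta>))"
      using eq den by (simp add: field_simps)
    have "ln v = ln \<delta> + b t" unfolding v_def using dpos by (simp add: ln_mult)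
    then show ?thesis using v unfolding E_def by simp
  qed
  have lim0: "((\<lambda>t. exp (- g t)) \<longlongrightarrow> 0) at_top"
  proof -
    have "((\<lambda>t::real. exp (-(2*k*ln(t/t0)))) \<longlongrightarrow> 0) at_top"
      using kpos t0_pos by real_asymp
    then show ?thesis unfolding g_def sk .
  qed
  have ratio_eq: "((1 + \<delta>) * exp (g t) - (1 - \<delta>)) / ((1 + \<delta>) * exp (g t) + (1 - \<delta>))
      = ((1 + \<delta>) - (1 - \<delta>) * exp (- g t)) / ((1 + \<delta>) + (1 - \<delta>) * exp (- g t))" for t
  proof -
    define u where "u = exp (- g t)"
    have u: "u > 0" unfolding u_def by simp
    have e: "exp (g t) = 1 / u" unfolding u_def by (simp add: exp_minus divide_inverse)
    have n1: "(1 + \<delta>) * (1 / u) - (1 - \<delta>) = ((1 + \<delta>) - (1 - \<delta>) * u) / u"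
      using u by (simp add: field_simps)
    have n2: "(1 + \<delta>) * (1 / u) + (1 - \<delta>) = ((1 + \<delta>) + (1 - \<delta>) * u) / u"
      using u by (simp add: field_simps)
    show ?thesis unfolding e n1 n2 u_def[symmetric] using u by simp
  qed
  have lim1: "((\<lambda>t. ((1 + \<delta>) - (1 - \<delta>) * exp (- g t)) / ((1 + \<delta>) + (1 - \<delta>) * exp (- g t))) \<longlongrightarrow>
      ((1 + \<delta>) - (1 - \<delta>) * 0) / ((1 + \<delta>) + (1 - \<delta>) * 0)) at_top"
    using dpos by (intro tendsto_intros lim0) auto
  then have lim2: "((\<lambda>t. ln (((1 + \<delta>) * exp (g t) - (1 - \<delta>)) / ((1 + \<delta>) * exp (g t) + (1 - \<delta>))) - ln \<delta>)
      \<longlongrightarrow> ln 1 - ln \<delta>) at_top"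
    unfolding ratio_eq using dpos by (intro tendsto_intros) auto
  have blim: "(b \<longlongrightarrow> - ln \<delta>) at_top"
  proof (rule Lim_transform_eventually)
    show "((\<lambda>t. ln (((1 + \<delta>) * exp (g t) - (1 - \<delta>)) / ((1 + \<delta>) * exp (g t) + (1 - \<delta>))) - ln \<delta>)
      \<longlongrightarrow> - ln \<delta>) at_top" using lim2 by simp
    show "\<forall>\<^sub>F t in at_top. ln (((1 + \<delta>) * exp (g t) - (1 - \<delta>)) / ((1 + \<delta>) * exp (g t) + (1 - \<delta>))) - ln \<delta> = b t"
      using eventually_ge_at_top[of t0] by eventually_elim (simp add: formula)
  qed
  show ?thesis using db formula blim by blast
qed

end
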